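(* Let $\phi,\tilde\phi:\mathbb{R}\to(0,1)$ be differentiable, strictly increasing, surjective functions whose derivatives are each monotone on $(z_0,\infty)$ for some $z_0\ge 0$. Suppose $\phi$ has a higher order of saturation than $\tilde\phi$, i.e. (i) $\lim_{z\to\infty}\frac{1-\phi(z)}{1-\tilde\phi(az)}=0$ for every $a>0$, and (ii) the function $z\mapsto\tilde\phi^{-1}(\phi(z))$ is convex on $(z_1,\infty)$ for some $z_1\in\mathbb R$. Define $g_\phi(f):=\phi'(\phi^{-1}(f))$ and $g_{\tilde\phi}(f):=\tilde\phi'(\tilde\phi^{-1}(f))$ for $f\in(0,1)$. Then $g_\phi(f)/g_{\tilde\phi}(f)\to\infty$ as $f\to 1^-$.
   Context: $\phi^{-1},\tilde\phi^{-1}:(0,1)\to\mathbb R$ denote the inverse functions. The quantity $g_\phi(f)$ is the derivative of the gate function expressed as a function of its output value $f$; under gradient flow on a parameter $z$ with loss $L$, the output $f=\phi(z)$ evolves by $df/d\tau=-g_\phi(f)^2\,\partial L/\partial f$. *)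

theory Defs
  imports "HOL-Analysis.Analysis"
begin

definition gate_g :: "(real \<Rightarrow> real) \<Rightarrow> real \<Rightarrow> real" where
  "gate_g \<phi> f = deriv \<phi> (inv \<phi> f)"

end

theory Submission
  imports Defs
begin

theorem theorem1:
  fixes \<phi> \<psi> :: "real \<Rightarrow> real"
  assumes diff_phi: "\<And>z. \<phi> differentiable (at z)"
    and diff_psi: "\<And>z. \<psi> differentiable (at z)"
    and mono_phi: "strict_mono \<phi>"
    and mono_psi: "strict_mono \<psi>"
    and range_phi: "range \<phi> = {0<..<1}"
    and range_psi: "range \<psi> = {0<..<1}"
    and dmono_phi: "\<exists>z0\<ge>0. mono_on {z0<..} (deriv \<phi>) \<or> antimono_on {z0<..} (deriv \<phi>)"
    and dmono_psi: "\<exists>z0\<ge>0. mono_on {z0<..} (deriv \<psi>) \<or> antimono_on {z0<..} (deriv \<psi>)"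
    and sat: "\<And>a. a > 0 \<Longrightarrow> ((\<lambda>z. (1 - \<phi> z) / (1 - \<psi> (a * z))) \<longlongrightarrow> 0) at_top"
    and cvx: "\<exists>z1. convex_on {z1<..} (\<lambda>z. inv \<psi> (\<phi> z))"
  shows "filterlim (\<lambda>f. gate_g \<phi> f / gate_g \<psi> f) at_top (at_left 1)"
proof -
  define h where "h = (\<lambda>z. inv \<psi> (\<phi> z))"
  have dphi: "\<And>z. DERIV \<phi> z :> deriv \<phi> z"
    using diff_phi DERIV_deriv_iff_real_differentiable by blast
  have dpsi: "\<And>z. DERIV \<psi> z :> deriv \<psi> z"
    using diff_psi DERIV_deriv_iff_real_differentiable by blast
  have cpsi: "\<And>z. isCont \<psi> z" using dpsi DERIV_isCont by blast
  have cpsi': "continuous_on A \<psi>" for A using cpsi continuous_at_imp_continuous_on by blast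
  have psi_inv: "\<psi> (inv \<psi> y) = y" if "0 < y" "y < 1" for y
    using that range_psi by (metis f_inv_into_f greaterThanLessThan_iff)
  have inj: "inj \<psi>" using mono_psi strict_mono_imp_inj_on by blast
  have inv_psi: "inv \<psi> (\<psi> w) = w" for w using inj by simp
  have phi01: "0 < \<phi> z \<and> \<phi> z < 1" for z using range_phi by auto
  have phi_eq: "\<psi> (h z) = \<phi> z" for z unfolding h_def using psi_inv phi01 by blast
  have psi_le: "\<psi> x \<le> \<psi> y \<longleftrightarrow> x \<le> y" for x y using mono_psi strict_mono_less_eq by blast
  have psi_lt: "\<psi> x < \<psi> y \<longleftrightarrow> x < y" for x y using mono_psi strict_mono_less by blast
  have phi_le: "\<phi> x \<le> \<phi> y \<longleftrightarrow> x \<le> y" for x y using mono_phi strict_mono_less_eq by blast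
  have dnn: "deriv \<psi> x \<ge> 0" for x
  proof (rule ccontr)
    assume "\<not> ?thesis"
    then obtain d where "d > 0" "\<forall>e>0. e < d \<longrightarrow> \<psi> x > \<psi> (x + e)"
      using DERIV_neg_dec_right[OF dpsi[of x]] by force
    then have "\<psi> x > \<psi> (x + d/2)" by auto
    then show False using psi_lt[of x "x + d/2"] \<open>d > 0\<close> by auto
  qed
  obtain z0 where z0: "mono_on {z0<..} (deriv \<psi>) \<or> antimono_on {z0<..} (deriv \<psi>)"
    using dmono_psi by blast
  have dpos: "deriv \<psi> c > 0" if "c > z0" for c
  proof (rule ccontr)
    assume "\<not> ?thesis"
    then have c0: "deriv \<psi> c = 0" using dnn[of c] by auto
    show False
      using z0
    proof
      assume m: "mono_on {z0<..} (deriv \<psi>)"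
      let ?a = "(z0 + c) / 2"
      have "\<psi> c = \<psi> ?a"
      proof (rule DERIV_isconst_end[where f=\<psi>])
        show "?a < c" using that by simp
        show "continuous_on {?a..c} \<psi>" by (rule cpsi')
        fix x assume "?a < x" "x < c"
        then have "deriv \<psi> x \<le> deriv \<psi> c" using mono_onD[OF m, of x c] \<open>?a < x\<close> \<open>x < c\<close> that by auto
        then have "deriv \<psi> x = 0" using c0 dnn[of x] by auto
        then show "DERIV \<psi> x :> 0" using dpsi[of x] by simp
      qed
      then show False using psi_lt[of ?a c] that by simp
    next
      assume m: "antimono_on {z0<..} (deriv \<psi>)"
      have "\<psi> (c+1) = \<psi> c"
      proof (rule DERIV_isconst_end[where f=\<psi>])
        show "c < c+1" by simp
        show "continuous_on {c..c+1} \<psi>" by (rule cpsi')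
        fix x assume "c < x" "x < c+1"
        then have "deriv \<psi> x \<le> deriv \<psi> c" using monotone_onD[OF m, of c x] \<open>c < x\<close> that by auto
        then have "deriv \<psi> x = 0" using c0 dnn[of x] by auto
        then show "DERIV \<psi> x :> 0" using dpsi[of x] by simp
      qed
      then show False using psi_lt[of c "c+1"] by simp
    qed
  qed
  obtain w where w: "\<phi> w = \<psi> (z0 + 1)"
    using range_phi range_psi by (metis rangeE rangeI)
  have hbig: "h z > z0" if "z \<ge> w" for z
  proof -
    have "\<psi> (z0+1) \<le> \<psi> (h z)" using w phi_eq phi_le that by metis
    then show ?thesis using psi_le by fastforce
  qed
  define D where "D = (\<lambda>z. deriv \<phi> z / deriv \<psi> (h z))"
  have hder: "DERIV h z :> D z" if "z \<ge> w" for z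
  proof -
    have ne: "deriv \<psi> (h z) \<noteq> 0" using dpos hbig that by force
    have ic: "isCont (inv \<psi>) (\<psi> (h z))"
      by (rule isCont_inverse_function[of 1]) (auto simp: inv_psi cpsi)
    have "DERIV (inv \<psi>) (\<phi> z) :> inverse (deriv \<psi> (h z))"
    proof (rule DERIV_inverse_function[where a=0 and b=1])
      show "DERIV \<psi> (inv \<psi> (\<phi> z)) :> deriv \<psi> (h z)" using dpsi unfolding h_def by blast
      show "isCont (inv \<psi>) (\<phi> z)" using ic phi_eq by simp
    qed (use ne phi01 psi_inv in auto)
    from DERIV_chain2[OF this dphi[of z]]
    show ?thesis unfolding h_def D_def by (simp add: field_simps)
  qed
  obtain z1 where z1: "convex_on {z1<..} h" using cvx h_def by blast
  have main: "\<exists>Z. \<forall>z\<ge>Z. B \<le> D z" for B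
  proof (rule ccontr)
    assume "\<not> ?thesis"
    then have fr: "\<forall>Z. \<exists>z\<ge>Z. D z < B" by (meson not_le)
    define c where "c = max (z1 + 1) w"
    define a where "a = \<bar>B\<bar> + 1"
    have a0: "a > 0" unfolding a_def by simp
    have key: "h z \<le> a * z" if "z \<ge> max (c + 1) (h c - \<bar>B\<bar> * c + 1)" "D z < B" for z
    proof -
      have zc: "z > c" using that by simp
      have zw: "z \<ge> w" using zc unfolding c_def by simp
      have "h c - h z \<ge> D z * (c - z)"
      proof (rule convex_on_imp_above_tangent[OF z1])
        show "connected {z1<..}" by simp
        show "z \<in> interior {z1<..}" using zc unfolding c_def by (simp add: interior_open)
        show "c \<in> {z1<..}" unfolding c_def by simp
        show "(h has_real_derivative D z) (at z within {z1<..})"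
          using hder[OF zw] has_field_derivative_at_within by blast
      qed
      then have "h z \<le> h c + D z * (z - c)" by (simp add: algebra_simps)
      also have "\<dots> \<le> h c + B * (z - c)" using that zc by (intro add_left_mono mult_right_mono) auto
      also have "\<dots> \<le> h c + \<bar>B\<bar> * (z - c)" using zc by (intro add_left_mono mult_right_mono) auto
      also have "\<dots> \<le> a * z" using that unfolding a_def by (simp add: algebra_simps)
      finally show ?thesis .
    qed
    from sat[OF a0] have "eventually (\<lambda>z. dist ((1 - \<phi> z) / (1 - \<psi> (a * z))) 0 < 1) at_top"
      by (rule tendstoD) simp
    then obtain N where N: "\<And>z. z \<ge> N \<Longrightarrow> \<bar>(1 - \<phi> z) / (1 - \<psi> (a * z))\<bar> < 1"
      by (auto simp: eventually_at_top_linorder)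
    obtain z where z: "z \<ge> max N (max (c + 1) (h c - \<bar>B\<bar> * c + 1))" "D z < B" using fr by blast
    have "h z \<le> a * z" using key z by simp
    then have "\<psi> (h z) \<le> \<psi> (a * z)" using psi_le by blast
    then have le: "1 - \<psi> (a * z) \<le> 1 - \<phi> z" using phi_eq by simp
    have pos: "1 - \<psi> (a * z) > 0" using range_psi by auto
    have "(1 - \<phi> z) / (1 - \<psi> (a * z)) \<ge> 1" using le pos by simp
    moreover have "\<bar>(1 - \<phi> z) / (1 - \<psi> (a * z))\<bar> < 1" using N z by simp
    ultimately show False by linarith
  qed
  show ?thesis
    unfolding filterlim_at_top
  proof
    fix B
    obtain Z where Z: "\<forall>z\<ge>Z. B \<le> D z" using main by blast
    define Z' where "Z' = max Z w"
    have "eventually (\<lambda>f. f \<in> {\<phi> Z'<..<1}) (at_left 1)"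
      using eventually_at_left_real phi01 by blast
    then show "eventually (\<lambda>f. B \<le> gate_g \<phi> f / gate_g \<psi> f) (at_left 1)"
    proof (rule eventually_mono)
      fix f assume f: "f \<in> {\<phi> Z'<..<1}"
      then have "f \<in> range \<phi>" using range_phi phi01[of Z'] by auto
      then have fe: "\<phi> (inv \<phi> f) = f" by (meson f_inv_into_f)
      have "\<phi> Z' \<le> \<phi> (inv \<phi> f)" using fe f by simp
      then have "inv \<phi> f \<ge> Z'" using phi_le by blast
      then have "B \<le> D (inv \<phi> f)" using Z unfolding Z'_def by simp
      then show "B \<le> gate_g \<phi> f / gate_g \<psi> f"
        unfolding gate_g_def D_def h_def using fe by simp
    qed
  qed
qed

end
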